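(* Let $G$ be a graph. The following are equivalent: (a1) $M_1(G)$ is a non-trivial matroid and $G$ is a cacti-graph; (a2) for every component $A$ of $G$, the edge set $E(A)$ is an equivalence class of the relation $\sim$ of $M_1(G)$.
   Context: Graphs are finite, may have loops and parallel edges, and have no isolated vertices. A leaf is a vertex incident to exactly one edge, which is not a loop. A cacti-graph is a graph with no isolated vertices, no leaves, and no component that is a cycle. For $X\subseteq E(G)$, $G\langle X\rangle$ is the subgraph with edge set $X$ and vertex set the vertices incident to $X$. $M_1(G)$ (the bicircular matroid) is the matroid on $E(G)$ whose circuits are the inclusion-minimal members of $\{C\subseteq E(G):C\neq\emptyset,\ |C|=|V(G\langle C\rangle)|+1\}$. A matroid is non-trivial if it has at least one circuit and at least one cocircuit. For a matroid $M$ on $E$ with set of loops $L$ and set of coloops $L^*$ (elements in no circuit), the relation $\sim$ on $E\setminus(L\cup L^* )$ is defined by $a\sim b$ iff $a=b$ or $a,b$ lie in a common circuit; it is an equivalence relation. *)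

theory Defs
  imports Main
begin

text \<open>A graph is given by a finite edge set E and an incidence map ends, where
 ends e is the set of (one or two) end vertices of e; loops have one end.
 Parallel edges are allowed. The vertex set is the set of vertices incident to
 some edge, so there are no isolated vertices.\<close>

definition graph :: "'e set \<Rightarrow> ('e \<Rightarrow> 'v set) \<Rightarrow> bool" where
  "graph E ends \<longleftrightarrow> finite E \<and> (\<forall>e\<in>E. 1 \<le> card (ends e) \<and> card (ends e) \<le> 2)"

definition verts :: "('e \<Rightarrow> 'v set) \<Rightarrow> 'e set \<Rightarrow> 'v set" where
  "verts ends X = \<Union> (ends ` X)"

definition is_loop_edge :: "('e \<Rightarrow> 'v set) \<Rightarrow> 'e \<Rightarrow> bool" where
  "is_loop_edge ends e \<longleftrightarrow> card (ends e) = 1"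

definition bic_cand :: "'e set \<Rightarrow> ('e \<Rightarrow> 'v set) \<Rightarrow> 'e set \<Rightarrow> bool" where
  "bic_cand E ends C \<longleftrightarrow> C \<subseteq> E \<and> C \<noteq> {} \<and> card C = card (verts ends C) + 1"

definition bic_circuits :: "'e set \<Rightarrow> ('e \<Rightarrow> 'v set) \<Rightarrow> 'e set set" where
  "bic_circuits E ends = {C. bic_cand E ends C \<and> (\<forall>C'. C' \<subseteq> C \<and> bic_cand E ends C' \<longrightarrow> C' = C)}"

definition m_indep :: "'e set set \<Rightarrow> 'e set \<Rightarrow> bool" where
  "m_indep \<C> I \<longleftrightarrow> \<not> (\<exists>C\<in>\<C>. C \<subseteq> I)"

definition m_basis :: "'e set \<Rightarrow> 'e set set \<Rightarrow> 'e set \<Rightarrow> bool" where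
  "m_basis E \<C> B \<longleftrightarrow> B \<subseteq> E \<and> m_indep \<C> B \<and>
     (\<forall>B'. B \<subseteq> B' \<and> B' \<subseteq> E \<and> m_indep \<C> B' \<longrightarrow> B' = B)"

definition m_meets_all_bases :: "'e set \<Rightarrow> 'e set set \<Rightarrow> 'e set \<Rightarrow> bool" where
  "m_meets_all_bases E \<C> D \<longleftrightarrow> D \<subseteq> E \<and> D \<noteq> {} \<and> (\<forall>B. m_basis E \<C> B \<longrightarrow> D \<inter> B \<noteq> {})"

definition m_cocircuit :: "'e set \<Rightarrow> 'e set set \<Rightarrow> 'e set \<Rightarrow> bool" where
  "m_cocircuit E \<C> D \<longleftrightarrow> m_meets_all_bases E \<C> D \<and>
     (\<forall>D'. D' \<subseteq> D \<and> m_meets_all_bases E \<C> D' \<longrightarrow> D' = D)"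

definition m_nontrivial :: "'e set \<Rightarrow> 'e set set \<Rightarrow> bool" where
  "m_nontrivial E \<C> \<longleftrightarrow> (\<exists>C. C \<in> \<C>) \<and> (\<exists>D. m_cocircuit E \<C> D)"

definition m_loops :: "'e set \<Rightarrow> 'e set set \<Rightarrow> 'e set" where
  "m_loops E \<C> = {e\<in>E. {e} \<in> \<C>}"

definition m_coloops :: "'e set \<Rightarrow> 'e set set \<Rightarrow> 'e set" where
  "m_coloops E \<C> = {e\<in>E. \<forall>C\<in>\<C>. e \<notin> C}"

definition m_sim_dom :: "'e set \<Rightarrow> 'e set set \<Rightarrow> 'e set" where
  "m_sim_dom E \<C> = E - (m_loops E \<C> \<union> m_coloops E \<C>)"

definition m_sim :: "'e set \<Rightarrow> 'e set set \<Rightarrow> ('e \<times> 'e) set" where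
  "m_sim E \<C> = {(a, b). a \<in> m_sim_dom E \<C> \<and> b \<in> m_sim_dom E \<C> \<and>
                    (a = b \<or> (\<exists>C\<in>\<C>. a \<in> C \<and> b \<in> C))}"

definition adj :: "'e set \<Rightarrow> ('e \<Rightarrow> 'v set) \<Rightarrow> ('v \<times> 'v) set" where
  "adj E ends = {(u, v). \<exists>e\<in>E. u \<in> ends e \<and> v \<in> ends e}"

definition comp_verts :: "'e set \<Rightarrow> ('e \<Rightarrow> 'v set) \<Rightarrow> 'v set set" where
  "comp_verts E ends = verts ends E // ((adj E ends)\<^sup>*)"

definition comp_edge_sets :: "'e set \<Rightarrow> ('e \<Rightarrow> 'v set) \<Rightarrow> 'e set set" where
  "comp_edge_sets E ends = (\<lambda>K. {e\<in>E. ends e \<subseteq> K}) ` comp_verts E ends"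

definition degree :: "'e set \<Rightarrow> ('e \<Rightarrow> 'v set) \<Rightarrow> 'v \<Rightarrow> nat" where
  "degree E ends v = card {e\<in>E. v \<in> ends e \<and> \<not> is_loop_edge ends e}
                     + 2 * card {e\<in>E. v \<in> ends e \<and> is_loop_edge ends e}"

definition is_leaf :: "'e set \<Rightarrow> ('e \<Rightarrow> 'v set) \<Rightarrow> 'v \<Rightarrow> bool" where
  "is_leaf E ends v \<longleftrightarrow> (\<exists>e\<in>E. v \<in> ends e \<and> \<not> is_loop_edge ends e \<and>
                              (\<forall>e'\<in>E. v \<in> ends e' \<longrightarrow> e' = e))"

text \<open>A component is a cycle iff it (connected, by construction) is 2-regular.\<close>
definition comp_is_cycle :: "'e set \<Rightarrow> ('e \<Rightarrow> 'v set) \<Rightarrow> 'v set \<Rightarrow> bool" where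
  "comp_is_cycle E ends K \<longleftrightarrow> (\<forall>v\<in>K. degree E ends v = 2)"

definition cacti_graph :: "'e set \<Rightarrow> ('e \<Rightarrow> 'v set) \<Rightarrow> bool" where
  "cacti_graph E ends \<longleftrightarrow>
     \<not> (\<exists>v\<in>verts ends E. is_leaf E ends v) \<and>
     \<not> (\<exists>K\<in>comp_verts E ends. comp_is_cycle E ends K)"

end

theory Submission
  imports Defs
begin


locale circsys =
  fixes \<C> :: "'e set set"
  assumes fin: "\<And>C. C \<in> \<C> \<Longrightarrow> finite C"
    and inc: "\<And>C1 C2. C1 \<in> \<C> \<Longrightarrow> C2 \<in> \<C> \<Longrightarrow> C1 \<subseteq> C2 \<Longrightarrow> C1 = C2"
    and we: "\<And>C1 C2 e. C1 \<in> \<C> \<Longrightarrow> C2 \<in> \<C> \<Longrightarrow> C1 \<noteq> C2 \<Longrightarrow> e \<in> C1 \<Longrightarrow> e \<in> C2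
              \<Longrightarrow> \<exists>C3\<in>\<C>. C3 \<subseteq> (C1 \<union> C2) - {e}"
begin

lemma strong_elim_aux:
  "\<forall>C1 C2 e f. card (C1 \<union> C2) = n \<longrightarrow> C1 \<in> \<C> \<longrightarrow> C2 \<in> \<C> \<longrightarrow> e \<in> C1 \<longrightarrow> e \<in> C2
     \<longrightarrow> f \<in> C1 \<longrightarrow> f \<notin> C2 \<longrightarrow> (\<exists>C3\<in>\<C>. f \<in> C3 \<and> C3 \<subseteq> (C1 \<union> C2) - {e})"
proof (induction n rule: less_induct)
  case (less n)
  show ?case
  proof (intro allI impI)
    fix C1 C2 e f
    assume n: "card (C1 \<union> C2) = n" and c1: "C1 \<in> \<C>" and c2: "C2 \<in> \<C>" and e1: "e \<in> C1"
      and e2: "e \<in> C2" and f1: "f \<in> C1" and f2: "f \<notin> C2"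
    have ne: "C1 \<noteq> C2" using f1 f2 by blast
    obtain C3 where C3: "C3 \<in> \<C>" "C3 \<subseteq> (C1 \<union> C2) - {e}" using we[OF c1 c2 ne e1 e2] by blast
    show "\<exists>C3\<in>\<C>. f \<in> C3 \<and> C3 \<subseteq> (C1 \<union> C2) - {e}"
    proof (cases "f \<in> C3")
      case True then show ?thesis using C3 by blast
    next
      case False
      have "\<not> C3 \<subseteq> C1"
      proof
        assume "C3 \<subseteq> C1" hence "C3 = C1" using inc C3(1) c1 by blast
        thus False using C3(2) e1 by blast
      qed
      then obtain g where g: "g \<in> C3" "g \<in> C2" "g \<notin> C1" using C3(2) by blast
      have finU: "finite (C1 \<union> C2)" using fin c1 c2 by blast
      have lt1: "card (C2 \<union> C3) < n"
        unfolding n[symmetric] apply (rule psubset_card_mono[OF finU]) using C3(2) False f1 f2 by blast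
      have "e \<notin> C3" using C3(2) by blast
      then obtain C4 where C4: "C4 \<in> \<C>" "e \<in> C4" "C4 \<subseteq> (C2 \<union> C3) - {g}"
        using less[OF lt1, rule_format, of C2 C3 g e, OF refl c2 C3(1) g(2) g(1) e2 \<open>e \<notin> C3\<close>] by blast
      have lt2: "card (C1 \<union> C4) < n"
        unfolding n[symmetric] apply (rule psubset_card_mono[OF finU]) using C3(2) C4(3) g by blast
      have "f \<notin> C4" using C4(3) f2 False by blast
      then obtain C5 where C5: "C5 \<in> \<C>" "f \<in> C5" "C5 \<subseteq> (C1 \<union> C4) - {e}"
        using less[OF lt2, rule_format, of C1 C4 e f, OF refl c1 C4(1) e1 C4(2) f1 \<open>f \<notin> C4\<close>] by blast
      show ?thesis using C5 C4(3) C3(2) by blast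
    qed
  qed
qed

lemma strong_elim:
  "C1 \<in> \<C> \<Longrightarrow> C2 \<in> \<C> \<Longrightarrow> e \<in> C1 \<Longrightarrow> e \<in> C2 \<Longrightarrow> f \<in> C1 \<Longrightarrow> f \<notin> C2
   \<Longrightarrow> \<exists>C3\<in>\<C>. f \<in> C3 \<and> C3 \<subseteq> (C1 \<union> C2) - {e}"
  by (rule strong_elim_aux[rule_format, OF refl])

lemma trans_aux:
  "\<forall>C1 C2 a c. card (C1 \<union> C2) = n \<longrightarrow> C1 \<in> \<C> \<longrightarrow> C2 \<in> \<C> \<longrightarrow> a \<in> C1 \<longrightarrow> c \<in> C2
     \<longrightarrow> C1 \<inter> C2 \<noteq> {} \<longrightarrow> (\<exists>D\<in>\<C>. a \<in> D \<and> c \<in> D)"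
proof (induction n rule: less_induct)
  case (less n)
  show ?case
  proof (intro allI impI)
    fix C1 C2 a c
    assume n: "card (C1 \<union> C2) = n" and c1: "C1 \<in> \<C>" and c2: "C2 \<in> \<C>" and a1: "a \<in> C1"
      and c2c: "c \<in> C2" and int: "C1 \<inter> C2 \<noteq> {}"
    show "\<exists>D\<in>\<C>. a \<in> D \<and> c \<in> D"
    proof (cases "c \<in> C1 \<or> a \<in> C2")
      case True then show ?thesis using c1 c2 a1 c2c by blast
    next
      case False
      then have ac: "c \<notin> C1" "a \<notin> C2" by auto
      obtain b where b: "b \<in> C1" "b \<in> C2" using int by blast
      have finU: "finite (C1 \<union> C2)" using fin c1 c2 by blast
      obtain C3 where C3: "C3 \<in> \<C>" "a \<in> C3" "C3 \<subseteq> (C1 \<union> C2) - {b}"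
        using strong_elim[OF c1 c2 b a1 ac(2)] by blast
      obtain C4 where C4: "C4 \<in> \<C>" "c \<in> C4" "C4 \<subseteq> (C2 \<union> C1) - {b}"
        using strong_elim[OF c2 c1 b(2) b(1) c2c ac(1)] by blast
      have "\<not> C3 \<subseteq> C1"
      proof
        assume "C3 \<subseteq> C1" hence "C3 = C1" using inc C3(1) c1 by blast
        thus False using C3(3) b by blast
      qed
      then obtain x where x: "x \<in> C3" "x \<in> C2" "x \<notin> C1" using C3(3) by blast
      have "\<not> C4 \<subseteq> C2"
      proof
        assume "C4 \<subseteq> C2" hence "C4 = C2" using inc C4(1) c2 by blast
        thus False using C4(3) b by blast
      qed
      then obtain y where y: "y \<in> C4" "y \<in> C1" "y \<notin> C2" using C4(3) by blast
      show ?thesis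
      proof (cases "C1 - C2 \<subseteq> C3")
        case False
        then obtain z where z: "z \<in> C1" "z \<notin> C2" "z \<notin> C3" by blast
        have lt: "card (C3 \<union> C2) < n"
          unfolding n[symmetric] apply (rule psubset_card_mono[OF finU]) using C3(3) z by blast
        show ?thesis using less[OF lt, rule_format, of C3 C2 a c, OF refl C3(1) c2 C3(2) c2c] x by blast
      next
        case sub1: True
        show ?thesis
        proof (cases "C2 - C1 \<subseteq> C4")
          case False
          then obtain z where z: "z \<in> C2" "z \<notin> C1" "z \<notin> C4" by blast
          have lt: "card (C1 \<union> C4) < n"
            unfolding n[symmetric] apply (rule psubset_card_mono[OF finU]) using C4(3) z by blast
          show ?thesis using less[OF lt, rule_format, of C1 C4 a c, OF refl c1 C4(1) a1 C4(2)] y by blast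
        next
          case True
          have "x \<in> C4" using True x by blast
          have lt: "card (C3 \<union> C4) < n"
            unfolding n[symmetric] apply (rule psubset_card_mono[OF finU]) using C3(3) C4(3) b by blast
          show ?thesis using less[OF lt, rule_format, of C3 C4 a c, OF refl C3(1) C4(1) C3(2) C4(2)] x \<open>x \<in> C4\<close> by blast
        qed
      qed
    qed
  qed
qed

lemma common_trans:
  "C1 \<in> \<C> \<Longrightarrow> C2 \<in> \<C> \<Longrightarrow> a \<in> C1 \<Longrightarrow> b \<in> C1 \<Longrightarrow> b \<in> C2 \<Longrightarrow> c \<in> C2 \<Longrightarrow> \<exists>D\<in>\<C>. a \<in> D \<and> c \<in> D"
  using trans_aux[rule_format, OF refl, of C1 C2 a c] by blast

end



definition fx :: "('e \<Rightarrow> 'v set) \<Rightarrow> 'e set \<Rightarrow> int" where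
  "fx ends X = int (card X) - int (card (verts ends X))"

definition mult :: "('e \<Rightarrow> 'v set) \<Rightarrow> 'e \<Rightarrow> nat" where
  "mult ends e = (if card (ends e) = 1 then 2 else 1)"

definition Aof :: "'e set \<Rightarrow> ('e \<Rightarrow> 'v set) \<Rightarrow> 'v set \<Rightarrow> 'e set" where
  "Aof E ends K = {e\<in>E. ends e \<subseteq> K}"

lemma verts_Un: "verts ends (X \<union> Y) = verts ends X \<union> verts ends Y"
  unfolding verts_def by blast

lemma verts_mono: "X \<subseteq> Y \<Longrightarrow> verts ends X \<subseteq> verts ends Y"
  unfolding verts_def by blast

lemma verts_empty[simp]: "verts ends {} = {}"
  unfolding verts_def by simp

lemma verts_single[simp]: "verts ends {e} = ends e"
  unfolding verts_def by simp

lemma verts_Int: "verts ends (X \<inter> Y) \<subseteq> verts ends X \<inter> verts ends Y"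
  unfolding verts_def by blast

lemma fx_empty[simp]: "fx ends {} = 0"
  unfolding fx_def by simp

locale bgraph =
  fixes E :: "'e set" and ends :: "'e \<Rightarrow> 'v set"
  assumes gr: "graph E ends"
begin

abbreviation "ff \<equiv> fx ends"

lemma finE: "finite E" using gr unfolding graph_def by blast

lemma ends_card: "e \<in> E \<Longrightarrow> 1 \<le> card (ends e) \<and> card (ends e) \<le> 2"
  using gr unfolding graph_def by blast

lemma ends_fin: "e \<in> E \<Longrightarrow> finite (ends e)"
proof -
  assume "e \<in> E"
  hence "0 < card (ends e)" using ends_card by fastforce
  thus ?thesis by (rule card_ge_0_finite)
qed

lemma ends_ne: "e \<in> E \<Longrightarrow> ends e \<noteq> {}"
  using ends_card by force

lemma fin_sub: "X \<subseteq> E \<Longrightarrow> finite X"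
  using finE finite_subset by blast

lemma verts_fin: "X \<subseteq> E \<Longrightarrow> finite (verts ends X)"
proof -
  assume X: "X \<subseteq> E"
  show ?thesis unfolding verts_def
    apply (rule finite_Union) using fin_sub[OF X] apply simp using ends_fin X by blast
qed

lemma fx_remove: "X \<subseteq> E \<Longrightarrow> x \<in> X \<Longrightarrow> ff X - 1 \<le> ff (X - {x})"
proof -
  assume X: "X \<subseteq> E" "x \<in> X"
  have "card (X - {x}) = card X - 1" using X fin_sub by simp
  moreover have "card X \<ge> 1"
  proof -
    have "0 < card X" using card_gt_0_iff fin_sub X by blast
    thus ?thesis by simp
  qed
  moreover have "card (verts ends (X - {x})) \<le> card (verts ends X)"
    by (rule card_mono[OF verts_fin[OF X(1)] verts_mono]) blast
  ultimately show ?thesis unfolding fx_def by linarith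
qed

lemma supermod: "X \<subseteq> E \<Longrightarrow> Y \<subseteq> E \<Longrightarrow> ff X + ff Y \<le> ff (X \<union> Y) + ff (X \<inter> Y)"
proof -
  assume XY: "X \<subseteq> E" "Y \<subseteq> E"
  note c1 = card_Un_Int[OF fin_sub[OF XY(1)] fin_sub[OF XY(2)]]
  note c2 = card_Un_Int[OF verts_fin[OF XY(1)] verts_fin[OF XY(2)]]
  have c3: "card (verts ends (X \<inter> Y)) \<le> card (verts ends X \<inter> verts ends Y)"
    apply (rule card_mono) using verts_fin[OF XY(1)] apply blast by (rule verts_Int)
  show ?thesis using c1 c2 c3 unfolding fx_def verts_Un by linarith
qed

abbreviation "circ \<equiv> bic_circuits E ends"

lemma cand_iff: "bic_cand E ends C \<longleftrightarrow> C \<subseteq> E \<and> C \<noteq> {} \<and> ff C = 1"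
  unfolding bic_cand_def fx_def by linarith

lemma circ_cand: "C \<in> circ \<Longrightarrow> bic_cand E ends C"
  unfolding bic_circuits_def by blast

lemma circ_sub: "C \<in> circ \<Longrightarrow> C \<subseteq> E"
  using circ_cand cand_iff by blast

lemma circ_ne: "C \<in> circ \<Longrightarrow> C \<noteq> {}"
  using circ_cand cand_iff by blast

lemma circ_fx: "C \<in> circ \<Longrightarrow> ff C = 1"
  using circ_cand cand_iff by blast

lemma circ_min: "C \<in> circ \<Longrightarrow> D \<subseteq> C \<Longrightarrow> bic_cand E ends D \<Longrightarrow> D = C"
  unfolding bic_circuits_def by blast

lemma L0:
  assumes Z: "Z \<subseteq> E" "1 \<le> ff Z" and pr: "\<And>Z'. Z' \<subseteq> Z \<Longrightarrow> Z' \<noteq> Z \<Longrightarrow> ff Z' \<le> 0"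
  shows "Z \<in> circ"
proof -
  have ne: "Z \<noteq> {}" using Z by auto
  then obtain z where z: "z \<in> Z" by blast
  have "ff (Z - {z}) \<le> 0" using pr z by blast
  moreover have "ff Z - 1 \<le> ff (Z - {z})" using fx_remove Z z by blast
  ultimately have "ff Z = 1" using Z by linarith
  hence cand: "bic_cand E ends Z" using cand_iff Z ne by blast
  have "\<forall>C'. C' \<subseteq> Z \<and> bic_cand E ends C' \<longrightarrow> C' = Z"
  proof (intro allI impI)
    fix C' assume H: "C' \<subseteq> Z \<and> bic_cand E ends C'"
    hence f1: "ff C' = 1" using cand_iff by blast
    show "C' = Z"
    proof (rule ccontr)
      assume "C' \<noteq> Z"
      hence "ff C' \<le> 0" using pr H by blast
      thus False using f1 by linarith
    qed
  qed
  thus ?thesis unfolding bic_circuits_def using cand by blast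
qed

lemma min_set:
  assumes "X \<subseteq> E" "1 \<le> ff X"
  obtains Z where "Z \<subseteq> X" "1 \<le> ff Z" "Z \<in> circ"
proof -
  have ex: "\<exists>Z. (Z \<subseteq> X \<and> 1 \<le> ff Z) \<and> (\<forall>Y. Y \<subseteq> X \<and> 1 \<le> ff Y \<longrightarrow> card Z \<le> card Y)"
    apply (rule ex_has_least_nat[where P="\<lambda>Y. Y \<subseteq> X \<and> 1 \<le> ff Y" and k=X and m=card])
    using assms by simp
  then obtain Z where Z: "Z \<subseteq> X \<and> 1 \<le> ff Z" and m: "\<forall>Y. Y \<subseteq> X \<and> 1 \<le> ff Y \<longrightarrow> card Z \<le> card Y"
    by blast
  have ZE: "Z \<subseteq> E" using Z assms by blast
  have "Z \<in> circ"
  proof (rule L0[OF ZE])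
    show "1 \<le> ff Z" using Z by blast
    fix Z' assume "Z' \<subseteq> Z" "Z' \<noteq> Z"
    hence "Z' \<subset> Z" by blast
    hence "card Z' < card Z" by (rule psubset_card_mono[OF fin_sub[OF ZE]])
    show "ff Z' \<le> 0"
    proof (rule ccontr)
      assume "\<not> ff Z' \<le> 0"
      hence "Z' \<subseteq> X \<and> 1 \<le> ff Z'" using \<open>Z' \<subseteq> Z\<close> Z by auto
      hence "card Z \<le> card Z'" using m by blast
      thus False using \<open>card Z' < card Z\<close> by linarith
    qed
  qed
  thus ?thesis using that Z by blast
qed

lemma L1: "X \<subseteq> E \<Longrightarrow> 1 \<le> ff X \<Longrightarrow> \<exists>C\<in>circ. C \<subseteq> X"
proof -
  assume a: "X \<subseteq> E" "1 \<le> ff X"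
  obtain Z where "Z \<subseteq> X" "1 \<le> ff Z" "Z \<in> circ" by (rule min_set[OF a])
  thus ?thesis by blast
qed

lemma proper: "C \<in> circ \<Longrightarrow> Y \<subseteq> C \<Longrightarrow> Y \<noteq> C \<Longrightarrow> ff Y \<le> 0"
proof (rule ccontr)
  assume C: "C \<in> circ" "Y \<subseteq> C" "Y \<noteq> C" "\<not> ff Y \<le> 0"
  have "1 \<le> ff Y" using C(4) by linarith
  moreover have "Y \<subseteq> E" using C(1,2) circ_sub by blast
  ultimately obtain D where D: "D \<in> circ" "D \<subseteq> Y" using L1 by blast
  hence "D = C" using circ_min[OF C(1)] circ_cand C(2) by blast
  thus False using C D by blast
qed

lemma circ_inc: "C1 \<in> circ \<Longrightarrow> C2 \<in> circ \<Longrightarrow> C1 \<subseteq> C2 \<Longrightarrow> C1 = C2"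
  using circ_min circ_cand by blast

lemma weak_elim:
  assumes c: "C1 \<in> circ" "C2 \<in> circ" "C1 \<noteq> C2" "e \<in> C1" "e \<in> C2"
  shows "\<exists>C3\<in>circ. C3 \<subseteq> (C1 \<union> C2) - {e}"
proof -
  have s: "C1 \<subseteq> E" "C2 \<subseteq> E" using circ_sub c(1,2) by auto
  have "C1 \<inter> C2 \<noteq> C1"
  proof
    assume "C1 \<inter> C2 = C1"
    hence "C1 \<subseteq> C2" by blast
    thus False using circ_inc[OF c(1,2)] c(3) by blast
  qed
  hence "ff (C1 \<inter> C2) \<le> 0" using proper[OF c(1)] by blast
  hence "2 \<le> ff (C1 \<union> C2)" using supermod[OF s] circ_fx[OF c(1)] circ_fx[OF c(2)] by linarith
  moreover have "ff (C1 \<union> C2) - 1 \<le> ff ((C1 \<union> C2) - {e})"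
    apply (rule fx_remove) using s c by auto
  ultimately have "1 \<le> ff ((C1 \<union> C2) - {e})" by linarith
  moreover have "(C1 \<union> C2) - {e} \<subseteq> E" using s by blast
  ultimately show ?thesis using L1 by blast
qed

sublocale circsys circ
proof
  show "\<And>C. C \<in> circ \<Longrightarrow> finite C" using circ_sub fin_sub by blast
  show "\<And>C1 C2. C1 \<in> circ \<Longrightarrow> C2 \<in> circ \<Longrightarrow> C1 \<subseteq> C2 \<Longrightarrow> C1 = C2" by (rule circ_inc)
  show "\<And>C1 C2 e. C1 \<in> circ \<Longrightarrow> C2 \<in> circ \<Longrightarrow> C1 \<noteq> C2 \<Longrightarrow> e \<in> C1 \<Longrightarrow> e \<in> C2 \<Longrightarrow>
     \<exists>C3\<in>circ. C3 \<subseteq> C1 \<union> C2 - {e}" by (rule weak_elim)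
qed

end



context bgraph begin

section \<open>Components\<close>

abbreviation "R \<equiv> (adj E ends)\<^sup>*"

lemma adj_sym: "sym (adj E ends)"
  unfolding sym_def adj_def by blast

lemma R_sym: "(x, y) \<in> R \<Longrightarrow> (y, x) \<in> R"
  using sym_rtrancl[OF adj_sym] unfolding sym_def by blast

lemma compE:
  assumes "K \<in> comp_verts E ends"
  obtains x where "x \<in> verts ends E" "K = R `` {x}"
  using assms unfolding comp_verts_def quotient_def by blast

lemma comp_of: "v \<in> verts ends E \<Longrightarrow> R `` {v} \<in> comp_verts E ends"
  unfolding comp_verts_def quotient_def by blast

lemma comp_closed:
  assumes K: "K \<in> comp_verts E ends" and e: "e \<in> E" "w \<in> ends e" "w \<in> K"
  shows "ends e \<subseteq> K"
proof
  fix u assume u: "u \<in> ends e"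
  obtain x where x: "K = R `` {x}" using compE[OF K] by blast
  have "(x, w) \<in> R" using e(3) x by blast
  moreover have "(w, u) \<in> adj E ends" unfolding adj_def using e(1,2) u by blast
  ultimately have "(x, u) \<in> R" by (rule rtrancl_into_rtrancl)
  thus "u \<in> K" using x by blast
qed

lemma comp_sub:
  assumes K: "K \<in> comp_verts E ends"
  shows "K \<subseteq> verts ends E"
proof
  fix y assume y: "y \<in> K"
  obtain x where x: "x \<in> verts ends E" "K = R `` {x}" using compE[OF K] by blast
  have "(x, y) \<in> R" using y x by blast
  thus "y \<in> verts ends E"
  proof (induction rule: rtrancl_induct)
    case base then show ?case using x by blast
  next
    case (step y z)
    then show ?case unfolding adj_def verts_def by blast
  qed
qed

lemma comp_conn:
  assumes K: "K \<in> comp_verts E ends" and S: "S \<subseteq> K" "s \<in> S"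
    and cl: "\<And>e. e \<in> E \<Longrightarrow> ends e \<inter> S \<noteq> {} \<Longrightarrow> ends e \<subseteq> S"
  shows "K \<subseteq> S"
proof
  fix y assume y: "y \<in> K"
  obtain x where x: "x \<in> verts ends E" "K = R `` {x}" using compE[OF K] by blast
  have "(x, s) \<in> R" using S x by blast
  hence "(s, x) \<in> R" by (rule R_sym)
  moreover have "(x, y) \<in> R" using y x by blast
  ultimately have "(s, y) \<in> R" by (rule rtrancl_trans)
  thus "y \<in> S"
  proof (induction rule: rtrancl_induct)
    case base then show ?case using S by blast
  next
    case (step y z)
    then obtain e where "e \<in> E" "y \<in> ends e" "z \<in> ends e" unfolding adj_def by blast
    hence "ends e \<subseteq> S" using cl step.IH by blast
    thus ?case using \<open>z \<in> ends e\<close> by blast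
  qed
qed

lemma comp_ne:
  assumes K: "K \<in> comp_verts E ends"
  obtains x where "x \<in> K"
proof -
  obtain x where x: "x \<in> verts ends E" "K = R `` {x}" using compE[OF K] by blast
  hence "x \<in> K" by blast
  thus ?thesis using that by blast
qed

lemma A_meet:
  assumes K: "K \<in> comp_verts E ends" and e: "e \<in> E" "ends e \<inter> K \<noteq> {}"
  shows "e \<in> Aof E ends K"
  using comp_closed[OF K e(1)] e unfolding Aof_def by blast

lemma A_sub: "Aof E ends K \<subseteq> E" unfolding Aof_def by blast

lemma verts_A: "verts ends (Aof E ends K) \<subseteq> K" unfolding Aof_def verts_def by blast

lemma verts_A_eq:
  assumes K: "K \<in> comp_verts E ends"
  shows "verts ends (Aof E ends K) = K"
proof
  show "verts ends (Aof E ends K) \<subseteq> K" by (rule verts_A)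
  show "K \<subseteq> verts ends (Aof E ends K)"
  proof
    fix v assume v: "v \<in> K"
    then obtain e where e: "e \<in> E" "v \<in> ends e" using comp_sub[OF K] unfolding verts_def by blast
    hence "e \<in> Aof E ends K" using A_meet[OF K] v by blast
    thus "v \<in> verts ends (Aof E ends K)" using e unfolding verts_def by blast
  qed
qed

lemma split_circ:
  assumes K: "K \<in> comp_verts E ends" and C: "C \<subseteq> E"
  shows "ff C = ff (C \<inter> Aof E ends K) + ff (C - Aof E ends K)"
proof -
  let ?X = "C \<inter> Aof E ends K" and ?Y = "C - Aof E ends K"
  have fC: "finite C" using fin_sub[OF C] .
  have c1: "card C = card ?X + card ?Y"
    by (rule card_Int_Diff[OF fC])
  have u: "verts ends C = verts ends ?X \<union> verts ends ?Y"
    unfolding verts_def by blast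
  have d: "verts ends ?X \<inter> verts ends ?Y = {}"
  proof (rule ccontr)
    assume "verts ends ?X \<inter> verts ends ?Y \<noteq> {}"
    then obtain w e1 e2 where w: "e1 \<in> ?X" "w \<in> ends e1" "e2 \<in> ?Y" "w \<in> ends e2"
      unfolding verts_def by blast
    have "w \<in> K" using w(1,2) unfolding Aof_def by blast
    hence "e2 \<in> Aof E ends K" using A_meet[OF K] w(3,4) C by blast
    thus False using w(3) by blast
  qed
  have c2: "card (verts ends C) = card (verts ends ?X) + card (verts ends ?Y)"
    unfolding u apply (rule card_Un_disjoint) using verts_fin C apply blast using verts_fin C apply blast
    by (rule d)
  show ?thesis unfolding fx_def using c1 c2 by linarith
qed

lemma circ_in_comp:
  assumes K: "K \<in> comp_verts E ends" and C: "C \<in> circ" and m: "C \<inter> Aof E ends K \<noteq> {}"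
  shows "C \<subseteq> Aof E ends K"
proof (rule ccontr)
  assume n: "\<not> C \<subseteq> Aof E ends K"
  have CE: "C \<subseteq> E" using circ_sub[OF C] .
  have "ff (C \<inter> Aof E ends K) \<le> 0" apply (rule proper[OF C]) using n by auto
  moreover have "ff (C - Aof E ends K) \<le> 0" apply (rule proper[OF C]) using m by auto
  ultimately show False using split_circ[OF K CE] circ_fx[OF C] by linarith
qed

section \<open>Degree counting\<close>

abbreviation "mu \<equiv> mult ends"

lemma deg_sum: "degree E ends v = (\<Sum>e\<in>{e\<in>E. v \<in> ends e}. mu e)"
proof -
  let ?N = "{e\<in>E. v \<in> ends e \<and> \<not> is_loop_edge ends e}"
  let ?L = "{e\<in>E. v \<in> ends e \<and> is_loop_edge ends e}"
  have fN: "finite ?N" "finite ?L" using finE by auto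
  have eq: "{e\<in>E. v \<in> ends e} = ?N \<union> ?L" by blast
  have "(\<Sum>e\<in>{e\<in>E. v \<in> ends e}. mu e) = (\<Sum>e\<in>?N. mu e) + (\<Sum>e\<in>?L. mu e)"
    unfolding eq by (rule sum.union_disjoint) (use fN in auto)
  also have "(\<Sum>e\<in>?N. mu e) = (\<Sum>e\<in>?N. 1)"
    by (rule sum.cong) (auto simp: mult_def is_loop_edge_def)
  also have "(\<Sum>e\<in>?L. mu e) = (\<Sum>e\<in>?L. 2)"
    by (rule sum.cong) (auto simp: mult_def is_loop_edge_def)
  finally show ?thesis unfolding degree_def by simp
qed

lemma sum_deg:
  assumes S: "finite S"
  shows "(\<Sum>s\<in>S. degree E ends s) = (\<Sum>e\<in>E. mu e * card (ends e \<inter> S))"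
proof -
  have "(\<Sum>s\<in>S. degree E ends s) = (\<Sum>s\<in>S. \<Sum>e\<in>E. if s \<in> ends e then mu e else 0)"
    unfolding deg_sum by (rule sum.cong) (auto simp: sum.inter_filter[OF finE])
  also have "\<dots> = (\<Sum>e\<in>E. \<Sum>s\<in>S. if s \<in> ends e then mu e else 0)"
    by (rule sum.swap)
  also have "\<dots> = (\<Sum>e\<in>E. mu e * card (ends e \<inter> S))"
  proof (rule sum.cong)
    fix e assume "e \<in> E"
    have "(\<Sum>s\<in>S. if s \<in> ends e then mu e else 0) = (\<Sum>s\<in>{s\<in>S. s \<in> ends e}. mu e)"
      by (rule sum.inter_filter[OF S, symmetric])
    also have "\<dots> = card {s\<in>S. s \<in> ends e} * mu e" by simp
    also have "{s\<in>S. s \<in> ends e} = ends e \<inter> S" by blast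
    finally show "(\<Sum>s\<in>S. if s \<in> ends e then mu e else 0) = mu e * card (ends e \<inter> S)" by simp
  qed simp
  finally show ?thesis .
qed

lemma contrib_le2: "e \<in> E \<Longrightarrow> mu e * card (ends e \<inter> S) \<le> 2"
proof -
  assume e: "e \<in> E"
  have c: "card (ends e \<inter> S) \<le> card (ends e)" by (rule card_mono[OF ends_fin[OF e]]) blast
  show ?thesis
  proof (cases "card (ends e) = 1")
    case True then show ?thesis using c unfolding mult_def by simp
  next
    case False then show ?thesis using c ends_card[OF e] unfolding mult_def by simp
  qed
qed

lemma contrib_full: "e \<in> E \<Longrightarrow> ends e \<subseteq> S \<Longrightarrow> mu e * card (ends e \<inter> S) = 2"
proof -
  assume e: "e \<in> E" "ends e \<subseteq> S"
  hence eq: "ends e \<inter> S = ends e" by blast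
  show ?thesis unfolding eq mult_def using ends_card[OF e(1)] by auto
qed

lemma contrib_not: "e \<in> E \<Longrightarrow> \<not> ends e \<subseteq> S \<Longrightarrow> mu e * card (ends e \<inter> S) \<le> 1"
proof -
  assume e: "e \<in> E" "\<not> ends e \<subseteq> S"
  have ps: "ends e \<inter> S \<subset> ends e" using e(2) by blast
  have c: "card (ends e \<inter> S) < card (ends e)" by (rule psubset_card_mono[OF ends_fin[OF e(1)] ps])
  show ?thesis
  proof (cases "card (ends e) = 1")
    case True then show ?thesis using c unfolding mult_def by simp
  next
    case False then show ?thesis using c ends_card[OF e(1)] unfolding mult_def by simp
  qed
qed

lemma contrib_zero: "ends e \<inter> S = {} \<Longrightarrow> mu e * card (ends e \<inter> S) = 0"
  by simp

lemma deg2_noleaf: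
  assumes v: "v \<in> verts ends E" and nl: "\<not> is_leaf E ends v"
  shows "2 \<le> degree E ends v"
proof -
  let ?N = "{e\<in>E. v \<in> ends e \<and> \<not> is_loop_edge ends e}"
  let ?L = "{e\<in>E. v \<in> ends e \<and> is_loop_edge ends e}"
  have fN: "finite ?N" "finite ?L" using finE by auto
  show ?thesis
  proof (cases "?L = {}")
    case False
    hence "card ?L \<ge> 1" using fN(2) by (simp add: Suc_leI card_gt_0_iff)
    thus ?thesis unfolding degree_def by linarith
  next
    case True
    obtain e where e: "e \<in> E" "v \<in> ends e" using v unfolding verts_def by blast
    have eN: "e \<in> ?N" using e True by blast
    have "\<not> card ?N \<le> 1"
    proof
      assume "card ?N \<le> 1"
      hence all: "\<forall>a1\<in>?N. \<forall>a2\<in>?N. a1 = a2" using card_le_Suc0_iff_eq[OF fN(1)] by simp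
      have "\<forall>e'\<in>E. v \<in> ends e' \<longrightarrow> e' = e"
      proof (intro ballI impI)
        fix e' assume "e' \<in> E" "v \<in> ends e'"
        hence "e' \<in> ?N" using True by blast
        thus "e' = e" using all eN by blast
      qed
      hence "is_leaf E ends v" unfolding is_leaf_def using eN by blast
      thus False using nl by blast
    qed
    thus ?thesis unfolding degree_def by linarith
  qed
qed

lemma sum_lower_strict:
  fixes h :: "'a \<Rightarrow> nat"
  assumes "finite A" "\<forall>x\<in>A. 2 \<le> h x" "a \<in> A" "3 \<le> h a"
  shows "2 * card A + 1 \<le> sum h A"
proof -
  have "sum h A = h a + sum h (A - {a})" using assms by (simp add: sum.remove)
  moreover have "2 * card (A - {a}) \<le> sum h (A - {a})"
    using sum_bounded_below[of "A - {a}" 2 h] assms by (simp add: mult.commute)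
  moreover have "card (A - {a}) + 1 = card A" using assms
    using card_Suc_Diff1[of A a] by simp
  ultimately show ?thesis using assms(4) by linarith
qed

lemma sum_upper_strict:
  fixes h :: "'a \<Rightarrow> nat"
  assumes "finite A" "\<forall>x\<in>A. h x \<le> 2" "a \<in> A" "h a \<le> 1"
  shows "sum h A + 1 \<le> 2 * card A"
proof -
  have "sum h A = h a + sum h (A - {a})" using assms by (simp add: sum.remove)
  moreover have "sum h (A - {a}) \<le> 2 * card (A - {a})"
    using sum_bounded_above[of "A - {a}" h 2] assms by (simp add: mult.commute)
  moreover have "card (A - {a}) + 1 = card A" using assms
    using card_Suc_Diff1[of A a] by simp
  ultimately show ?thesis using assms(4) by linarith
qed

end



context bgraph begin

lemma key:
  "Y \<subseteq> E \<Longrightarrow> g \<in> Y \<Longrightarrow> (\<forall>W. W \<subseteq> Y - {g} \<longrightarrow> ff W \<le> int m) \<Longrightarrow> int m + 1 \<le> ff Y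
   \<Longrightarrow> \<exists>C\<in>circ. g \<in> C \<and> C \<subseteq> Y"
proof (induction m arbitrary: Y)
  case 0
  obtain Z where Z: "Z \<subseteq> Y" "1 \<le> ff Z" "Z \<in> circ"
    by (rule min_set[OF 0(1)]) (use 0(4) in simp)
  have "g \<in> Z"
  proof (rule ccontr)
    assume "g \<notin> Z"
    hence "Z \<subseteq> Y - {g}" using Z(1) by blast
    hence "ff Z \<le> 0" using 0(3) by simp
    thus False using Z(2) by linarith
  qed
  thus ?case using Z by blast
next
  case (Suc k)
  show ?case
  proof (cases "\<forall>W. W \<subseteq> Y - {g} \<longrightarrow> ff W \<le> int k")
    case True
    show ?thesis by (rule Suc.IH[OF Suc.prems(1,2) True]) (use Suc.prems(4) in simp)
  next
    case False
    then obtain W0 where W0: "W0 \<subseteq> Y - {g}" "\<not> ff W0 \<le> int k" by blast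
    have W0f: "1 \<le> ff W0" using W0(2) by linarith
    have W0E: "W0 \<subseteq> E" using W0(1) Suc.prems(1) by blast
    obtain D where D: "D \<in> circ" "D \<subseteq> W0" using L1[OF W0E W0f] by blast
    obtain d where d: "d \<in> D" using circ_ne[OF D(1)] by blast
    have dY: "d \<in> Y" "d \<noteq> g" using d D(2) W0(1) by auto
    let ?Y' = "Y - {d}"
    have Y'E: "?Y' \<subseteq> E" using Suc.prems(1) by blast
    have gY': "g \<in> ?Y'" using Suc.prems(2) dY by blast
    have f1: "ff Y - 1 \<le> ff ?Y'" by (rule fx_remove[OF Suc.prems(1) dY(1)])
    have f2: "\<forall>W. W \<subseteq> ?Y' - {g} \<longrightarrow> ff W \<le> int k"
    proof (intro allI impI)
      fix W assume W: "W \<subseteq> ?Y' - {g}"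
      show "ff W \<le> int k"
      proof (rule ccontr)
        assume "\<not> ff W \<le> int k"
        hence fw: "int k + 1 \<le> ff W" by linarith
        have WE: "W \<subseteq> E" using W Suc.prems(1) by blast
        have DE: "D \<subseteq> E" using circ_sub[OF D(1)] .
        have sm: "ff W + ff D \<le> ff (W \<union> D) + ff (W \<inter> D)" by (rule supermod[OF WE DE])
        have "W \<inter> D \<noteq> D" using W d by blast
        hence "ff (W \<inter> D) \<le> 0" using proper[OF D(1)] by blast
        hence "int k + 2 \<le> ff (W \<union> D)" using sm fw circ_fx[OF D(1)] by linarith
        moreover have "W \<union> D \<subseteq> Y - {g}" using W D(2) W0(1) by blast
        hence "ff (W \<union> D) \<le> int (Suc k)" using Suc.prems(3) by blast
        ultimately show False by simp
      qed
    qed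
    have "int (Suc k) + 1 \<le> ff Y" using Suc.prems(4) .
    hence "int k + 1 \<le> ff ?Y'" using f1 by simp
    then obtain C where "C \<in> circ" "g \<in> C" "C \<subseteq> ?Y'" using Suc.IH[OF Y'E gY' f2] by blast
    thus ?thesis by blast
  qed
qed

section \<open>Matroid relation\<close>

abbreviation "Dom \<equiv> m_sim_dom E circ"
abbreviation "sim \<equiv> m_sim E circ"

lemma sing_not_circ: "e \<in> E \<Longrightarrow> {e} \<notin> circ"
proof
  assume e: "e \<in> E" "{e} \<in> circ"
  have "ff {e} = 1" using circ_fx[OF e(2)] .
  hence "card (ends e) = 0" unfolding fx_def by simp
  thus False using ends_card[OF e(1)] by simp
qed

lemma dom_iff: "x \<in> Dom \<longleftrightarrow> x \<in> E \<and> (\<exists>C\<in>circ. x \<in> C)"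
  unfolding m_sim_dom_def m_loops_def m_coloops_def using sing_not_circ by blast

lemma sim_iff: "(a, b) \<in> sim \<longleftrightarrow> a \<in> Dom \<and> b \<in> Dom \<and> (a = b \<or> (\<exists>C\<in>circ. a \<in> C \<and> b \<in> C))"
  unfolding m_sim_def by blast

lemma circ_dom: "C \<in> circ \<Longrightarrow> x \<in> C \<Longrightarrow> x \<in> Dom"
  using dom_iff circ_sub by blast

lemma sim_trans: "(a, b) \<in> sim \<Longrightarrow> (b, c) \<in> sim \<Longrightarrow> (a, c) \<in> sim"
proof -
  assume ab: "(a, b) \<in> sim" and bc: "(b, c) \<in> sim"
  have d: "a \<in> Dom" "c \<in> Dom" using ab bc sim_iff by auto
  show ?thesis
  proof (cases "a = b \<or> b = c")
    case True then show ?thesis using ab bc by auto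
  next
    case False
    then obtain C1 C2 where "C1 \<in> circ" "a \<in> C1" "b \<in> C1" "C2 \<in> circ" "b \<in> C2" "c \<in> C2"
      using ab bc sim_iff by meson
    then obtain D where "D \<in> circ" "a \<in> D" "c \<in> D" using common_trans by blast
    thus ?thesis using d sim_iff by blast
  qed
qed

lemma sim_circ: "C \<in> circ \<Longrightarrow> x \<in> C \<Longrightarrow> y \<in> C \<Longrightarrow> (x, y) \<in> sim"
proof -
  assume a: "C \<in> circ" "x \<in> C" "y \<in> C"
  have "x \<in> Dom" "y \<in> Dom" using circ_dom[OF a(1)] a(2,3) by auto
  thus ?thesis using sim_iff[of x y] a by blast
qed

lemma count_gap:
  assumes cac: "cacti_graph E ends" and K: "K \<in> comp_verts E ends"
    and g: "g \<in> Aof E ends K" and W: "W \<subseteq> Aof E ends K - {g}"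
  shows "ff W + 1 \<le> ff (Aof E ends K)"
proof -
  let ?A = "Aof E ends K"
  let ?F = "?A - W" and ?S = "K - verts ends W"
  have AE: "?A \<subseteq> E" by (rule A_sub)
  have fA: "finite ?A" using fin_sub[OF AE] .
  have WA: "W \<subseteq> ?A" using W by blast
  have fK: "finite K"
  proof -
    have "finite (verts ends ?A)" by (rule verts_fin[OF AE])
    thus ?thesis unfolding verts_A_eq[OF K] .
  qed
  have vW: "verts ends W \<subseteq> K" using verts_mono[where ends=ends, OF WA] unfolding verts_A_eq[OF K] .
  have cA: "card ?A = card W + card ?F"
  proof -
    have "?A \<inter> W = W" using WA by blast
    thus ?thesis using card_Int_Diff[OF fA, of W] by simp
  qed
  have cK: "card K = card (verts ends W) + card ?S"
  proof -
    have "K \<inter> verts ends W = verts ends W" using vW by blast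
    thus ?thesis using card_Int_Diff[OF fK, of "verts ends W"] by simp
  qed
  have diff: "ff (Aof E ends K) - ff W = int (card ?F) - int (card ?S)"
  proof -
    have "ff (Aof E ends K) = int (card ?A) - int (card K)" unfolding fx_def verts_A_eq[OF K] ..
    moreover have "ff W = int (card W) - int (card (verts ends W))" unfolding fx_def ..
    ultimately show ?thesis using cA cK by linarith
  qed
  have gF: "g \<in> ?F" using g W by blast
  have fF: "finite ?F" using fA by simp
  have fS: "finite ?S" using fK by simp
  have FE: "?F \<subseteq> E" using AE by blast
  have SK: "?S \<subseteq> K" by blast
  have deg2: "\<forall>s\<in>?S. 2 \<le> degree E ends s"
  proof
    fix s assume "s \<in> ?S"
    hence sv: "s \<in> verts ends E" using comp_sub[OF K] by blast
    have "\<not> is_leaf E ends s" using cac sv unfolding cacti_graph_def by blast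
    thus "2 \<le> degree E ends s" by (rule deg2_noleaf[OF sv])
  qed
  have out0: "\<forall>e\<in>E - ?F. ends e \<inter> ?S = {}"
  proof
    fix e assume e: "e \<in> E - ?F"
    show "ends e \<inter> ?S = {}"
    proof (rule ccontr)
      assume ne: "ends e \<inter> ?S \<noteq> {}"
      hence "ends e \<inter> K \<noteq> {}" by blast
      hence eA: "e \<in> ?A" using A_meet[OF K] e by blast
      have "e \<notin> W"
      proof
        assume "e \<in> W" hence "ends e \<subseteq> verts ends W" unfolding verts_def by blast
        thus False using ne by blast
      qed
      thus False using e eA by blast
    qed
  qed
  have sumeq: "(\<Sum>s\<in>?S. degree E ends s) = (\<Sum>e\<in>?F. mu e * card (ends e \<inter> ?S))"
  proof -
    have "(\<Sum>s\<in>?S. degree E ends s) = (\<Sum>e\<in>E. mu e * card (ends e \<inter> ?S))" by (rule sum_deg[OF fS])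
    also have "\<dots> = (\<Sum>e\<in>?F. mu e * card (ends e \<inter> ?S))"
    proof (rule sum.mono_neutral_right[OF finE FE])
      show "\<forall>i\<in>E - ?F. mu i * card (ends i \<inter> ?S) = 0"
      proof
        fix i assume "i \<in> E - ?F"
        hence "ends i \<inter> ?S = {}" using out0 by blast
        thus "mu i * card (ends i \<inter> ?S) = 0" by simp
      qed
    qed
    finally show ?thesis .
  qed
  have low: "2 * card ?S \<le> (\<Sum>s\<in>?S. degree E ends s)"
  proof -
    have "of_nat (card ?S) * 2 \<le> (\<Sum>s\<in>?S. degree E ends s)"
      by (rule sum_bounded_below) (use deg2 in blast)
    thus ?thesis by simp
  qed
  have up: "(\<Sum>e\<in>?F. mu e * card (ends e \<inter> ?S)) \<le> 2 * card ?F"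
  proof -
    have "(\<Sum>e\<in>?F. mu e * card (ends e \<inter> ?S)) \<le> of_nat (card ?F) * 2"
    proof (rule sum_bounded_above)
      fix i assume "i \<in> ?F"
      hence "i \<in> E" using FE by blast
      thus "mu i * card (ends i \<inter> ?S) \<le> 2" by (rule contrib_le2)
    qed
    thus ?thesis by simp
  qed
  have "card ?S + 1 \<le> card ?F"
  proof (cases "?S = {}")
    case True
    have "?F \<noteq> {}" using gF by blast
    hence "0 < card ?F" using card_gt_0_iff fF by blast
    hence "card ?F \<ge> 1" by linarith
    moreover have "card ?S = 0" by (subst True) simp
    ultimately show ?thesis by linarith
  next
    case Sne: False
    show ?thesis
    proof (cases "\<exists>s\<in>?S. 3 \<le> degree E ends s")
      case True
      then obtain s where s3: "s \<in> ?S" "3 \<le> degree E ends s" by blast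
      have "2 * card ?S + 1 \<le> (\<Sum>s\<in>?S. degree E ends s)"
        by (rule sum_lower_strict[OF fS deg2 s3])
      thus ?thesis using sumeq up by linarith
    next
      case nodeg3: False
      show ?thesis
      proof (cases "\<exists>e\<in>?F. \<not> ends e \<subseteq> ?S")
        case True
        then obtain e where e: "e \<in> ?F" "\<not> ends e \<subseteq> ?S" by blast
        have "(\<Sum>e\<in>?F. mu e * card (ends e \<inter> ?S)) + 1 \<le> 2 * card ?F"
          apply (rule sum_upper_strict[OF fF _ e(1)])
          using contrib_le2 FE apply blast
          using contrib_not e FE by blast
        thus ?thesis using sumeq low by linarith
      next
        case False
        have cl: "\<And>e. e \<in> E \<Longrightarrow> ends e \<inter> ?S \<noteq> {} \<Longrightarrow> ends e \<subseteq> ?S"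
        proof -
          fix e assume e: "e \<in> E" "ends e \<inter> ?S \<noteq> {}"
          hence "e \<in> ?F" using out0 by blast
          thus "ends e \<subseteq> ?S" using False by blast
        qed
        obtain s where s: "s \<in> ?S" using Sne by blast
        have "K \<subseteq> ?S" by (rule comp_conn[OF K SK s cl])
        have "\<forall>v\<in>K. degree E ends v = 2"
        proof
          fix v assume "v \<in> K"
          hence vS: "v \<in> ?S" using \<open>K \<subseteq> ?S\<close> by blast
          hence "2 \<le> degree E ends v" using deg2 by blast
          moreover have "\<not> 3 \<le> degree E ends v" using nodeg3 vS by blast
          ultimately show "degree E ends v = 2" by linarith
        qed
        hence "comp_is_cycle E ends K" unfolding comp_is_cycle_def by blast
        thus ?thesis using cac K unfolding cacti_graph_def by blast
      qed
    qed
  qed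
  thus ?thesis using diff by linarith
qed

lemma edge_in_circ:
  assumes cac: "cacti_graph E ends" and K: "K \<in> comp_verts E ends" and g: "g \<in> Aof E ends K"
  shows "\<exists>C\<in>circ. g \<in> C"
proof -
  let ?A = "Aof E ends K"
  have gap: "\<forall>W. W \<subseteq> ?A - {g} \<longrightarrow> ff W \<le> int (nat (ff ?A - 1))"
  proof (intro allI impI)
    fix W assume "W \<subseteq> ?A - {g}"
    hence "ff W + 1 \<le> ff ?A" by (rule count_gap[OF cac K g])
    thus "ff W \<le> int (nat (ff ?A - 1))" by linarith
  qed
  have "ff {} + 1 \<le> ff ?A" by (rule count_gap[OF cac K g]) blast
  hence "int (nat (ff ?A - 1)) + 1 \<le> ff ?A" by simp
  thus ?thesis using key[OF A_sub g gap] by blast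
qed

lemma forward:
  assumes cac: "cacti_graph E ends" and K: "K \<in> comp_verts E ends"
  shows "Aof E ends K \<in> Dom // sim"
proof -
  let ?A = "Aof E ends K"
  have Adom: "?A \<subseteq> Dom"
  proof
    fix e assume e: "e \<in> ?A"
    have "\<exists>C\<in>circ. e \<in> C" by (rule edge_in_circ[OF cac K e])
    moreover have "e \<in> E" using e A_sub by blast
    ultimately show "e \<in> Dom" using dom_iff by blast
  qed
  obtain x where x: "x \<in> K" by (rule comp_ne[OF K])
  have "x \<in> verts ends ?A" using x verts_A_eq[OF K] by simp
  then obtain a where a: "a \<in> ?A" "x \<in> ends a"
    unfolding verts_def by blast
  have aD: "a \<in> Dom" using a Adom by blast
  let ?T = "sim `` {a}"
  have "(a, a) \<in> sim" using aD sim_iff[of a a] by blast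
  hence aT: "a \<in> ?T" by blast
  have TA: "?T \<subseteq> ?A"
  proof
    fix b assume "b \<in> ?T"
    hence "(a, b) \<in> sim" by blast
    hence "b = a \<or> (\<exists>C\<in>circ. a \<in> C \<and> b \<in> C)" using sim_iff[of a b] by blast
    thus "b \<in> ?A"
    proof
      assume "b = a" thus ?thesis using a by blast
    next
      assume "\<exists>C\<in>circ. a \<in> C \<and> b \<in> C"
      then obtain C where C: "C \<in> circ" "a \<in> C" "b \<in> C" by blast
      have "C \<subseteq> ?A" apply (rule circ_in_comp[OF K C(1)]) using C a by blast
      thus ?thesis using C by blast
    qed
  qed
  have AT: "?A \<subseteq> ?T"
  proof (rule ccontr)
    assume "\<not> ?A \<subseteq> ?T"
    then obtain b where b: "b \<in> ?A" "b \<notin> ?T" by blast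
    have "\<exists>t u v. t \<in> ?T \<and> u \<in> ?A \<and> u \<notin> ?T \<and> v \<in> ends t \<and> v \<in> ends u"
    proof (rule ccontr)
      assume nop: "\<not> ?thesis"
      let ?S = "verts ends ?T"
      have SK: "?S \<subseteq> K" using verts_mono[where ends=ends, OF TA] verts_A[of K] by blast
      have cl: "\<And>e. e \<in> E \<Longrightarrow> ends e \<inter> ?S \<noteq> {} \<Longrightarrow> ends e \<subseteq> ?S"
      proof -
        fix e assume e: "e \<in> E" "ends e \<inter> ?S \<noteq> {}"
        then obtain v t where vt: "t \<in> ?T" "v \<in> ends t" "v \<in> ends e" unfolding verts_def by blast
        have "ends e \<inter> K \<noteq> {}" using vt SK unfolding verts_def by blast
        hence eA: "e \<in> ?A" using A_meet[OF K e(1)] by blast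
        show "ends e \<subseteq> ?S"
        proof (cases "e \<in> ?T")
          case True thus ?thesis unfolding verts_def by blast
        next
          case False thus ?thesis using nop vt eA by blast
        qed
      qed
      obtain v where "v \<in> ends a" using ends_ne a A_sub by blast
      hence vS: "v \<in> ?S" using aT unfolding verts_def by blast
      have "K \<subseteq> ?S" by (rule comp_conn[OF K SK vS cl])
      moreover obtain w where w: "w \<in> ends b" using ends_ne b A_sub by blast
      moreover have "ends b \<subseteq> K" using b unfolding Aof_def by blast
      ultimately obtain t where "t \<in> ?T" "w \<in> ends t" unfolding verts_def by blast
      thus False using nop b w by blast
    qed
    then obtain t u v where tuv: "t \<in> ?T" "u \<in> ?A" "u \<notin> ?T" "v \<in> ends t" "v \<in> ends u" by blast
    have tA: "t \<in> ?A" using tuv TA by blast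
    obtain C1 where C1: "C1 \<in> circ" "t \<in> C1" using edge_in_circ[OF cac K tA] by blast
    obtain C2 where C2: "C2 \<in> circ" "u \<in> C2" using edge_in_circ[OF cac K tuv(2)] by blast
    have at: "(a, t) \<in> sim" using tuv(1) by blast
    have C1T: "C1 \<subseteq> ?T"
    proof
      fix c assume c: "c \<in> C1"
      have "(t, c) \<in> sim" by (rule sim_circ[OF C1(1) C1(2) c])
      hence "(a, c) \<in> sim" by (rule sim_trans[OF at])
      thus "c \<in> ?T" by blast
    qed
    have C2T: "C2 \<inter> ?T = {}"
    proof (rule ccontr)
      assume "C2 \<inter> ?T \<noteq> {}"
      then obtain c where c: "c \<in> C2" "(a, c) \<in> sim" by blast
      have "(c, u) \<in> sim" by (rule sim_circ[OF C2(1) c(1) C2(2)])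
      hence "(a, u) \<in> sim" by (rule sim_trans[OF c(2)])
      thus False using tuv by blast
    qed
    have C1E: "C1 \<subseteq> E" "C2 \<subseteq> E" using circ_sub C1 C2 by auto
    have disj: "C1 \<inter> C2 = {}" using C1T C2T by blast
    let ?U = "C1 \<union> C2"
    let ?Y = "?U - {t, u}"
    have fU: "finite ?U" using fin_sub C1E by blast
    have cU: "card ?U = card C1 + card C2"
      using card_Un_disjoint[OF fin_sub[OF C1E(1)] fin_sub[OF C1E(2)] disj] .
    have vfin: "finite (verts ends C1)" "finite (verts ends C2)" using verts_fin C1E by auto
    have vint: "v \<in> verts ends C1 \<inter> verts ends C2" using tuv C1 C2 unfolding verts_def by blast
    have "verts ends C1 \<inter> verts ends C2 \<noteq> {}" using vint by blast
    moreover have "finite (verts ends C1 \<inter> verts ends C2)" using vfin by blast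
    ultimately have "0 < card (verts ends C1 \<inter> verts ends C2)" using card_gt_0_iff by blast
    hence "card (verts ends C1 \<inter> verts ends C2) \<ge> 1" by linarith
    hence cV: "card (verts ends ?U) + 1 \<le> card (verts ends C1) + card (verts ends C2)"
      using card_Un_Int[OF vfin] unfolding verts_Un by linarith
    have tu: "t \<noteq> u" using tuv by blast
    have cY: "card ?Y + 2 = card ?U"
    proof -
      have "card ?Y = card ?U - card {t, u}" apply (rule card_Diff_subset) apply simp using C1 C2 by blast
      moreover have "card {t, u} = 2" using tu by simp
      moreover have "card {t,u} \<le> card ?U" apply (rule card_mono[OF fU]) using C1 C2 by blast
      ultimately show ?thesis by linarith
    qed
    have YE: "?Y \<subseteq> E" using C1E by blast
    have vY: "card (verts ends ?Y) \<le> card (verts ends ?U)"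
      apply (rule card_mono) apply (rule verts_fin) using C1E apply blast by (rule verts_mono) blast
    have "1 \<le> ff ?Y"
      using cY vY cV cU circ_fx[OF C1(1)] circ_fx[OF C2(1)] unfolding fx_def by linarith
    then obtain D where D: "D \<in> circ" "D \<subseteq> ?Y" using L1[OF YE] by blast
    obtain d where d: "d \<in> D" using circ_ne[OF D(1)] by blast
    show False
    proof (cases "d \<in> ?T")
      case True
      have "D \<subseteq> ?T"
      proof
        fix x assume "x \<in> D"
        hence "(d, x) \<in> sim" by (rule sim_circ[OF D(1) d])
        moreover have "(a, d) \<in> sim" using True by blast
        ultimately have "(a, x) \<in> sim" using sim_trans by blast
        thus "x \<in> ?T" by blast
      qed
      hence "D \<subseteq> C1" using D(2) C2T by blast
      hence "D = C1" using circ_inc[OF D(1) C1(1)] by blast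
      thus False using D(2) C1(2) by blast
    next
      case False
      have "D \<inter> ?T = {}"
      proof (rule ccontr)
        assume "D \<inter> ?T \<noteq> {}"
        then obtain x where x: "x \<in> D" "(a, x) \<in> sim" by blast
        have "(x, d) \<in> sim" by (rule sim_circ[OF D(1) x(1) d])
        hence "(a, d) \<in> sim" by (rule sim_trans[OF x(2)])
        thus False using False by blast
      qed
      hence "D \<subseteq> C2" using D(2) C1T by blast
      hence "D = C2" using circ_inc[OF D(1) C2(1)] by blast
      thus False using D(2) C2(2) by blast
    qed
  qed
  have "?A = ?T" using TA AT by blast
  thus ?thesis using aD unfolding quotient_def by blast
qed

end



context bgraph begin

lemma Aof_eta: "(\<lambda>K. {e\<in>E. ends e \<subseteq> K}) = Aof E ends"
  by (rule ext) (simp add: Aof_def)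

lemma ces_eq: "comp_edge_sets E ends = Aof E ends ` comp_verts E ends"
  unfolding comp_edge_sets_def Aof_eta ..

lemma quot_sub: "A \<in> Dom // sim \<Longrightarrow> A \<subseteq> Dom"
proof -
  assume "A \<in> Dom // sim"
  then obtain x where x: "x \<in> Dom" "A = sim `` {x}" unfolding quotient_def by blast
  show "A \<subseteq> Dom"
  proof
    fix y assume "y \<in> A"
    hence "(x, y) \<in> sim" using x by blast
    thus "y \<in> Dom" using sim_iff[of x y] by blast
  qed
qed

lemma all_dom:
  assumes H: "\<forall>A\<in>comp_edge_sets E ends. A \<in> Dom // sim" and e: "e \<in> E"
  shows "e \<in> Dom"
proof -
  obtain v where v: "v \<in> ends e" using ends_ne[OF e] by blast
  have vE: "v \<in> verts ends E" using v e unfolding verts_def by blast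
  let ?K = "R `` {v}"
  have K: "?K \<in> comp_verts E ends" by (rule comp_of[OF vE])
  have "v \<in> ?K" by blast
  hence "e \<in> Aof E ends ?K" using A_meet[OF K e] v by blast
  moreover have "Aof E ends ?K \<in> comp_edge_sets E ends" unfolding ces_eq using K by blast
  hence "Aof E ends ?K \<subseteq> Dom" using H quot_sub by blast
  ultimately show ?thesis by blast
qed

lemma back_noleaf:
  assumes D: "\<And>e. e \<in> E \<Longrightarrow> e \<in> Dom" and v: "v \<in> verts ends E"
  shows "\<not> is_leaf E ends v"
proof
  assume "is_leaf E ends v"
  then obtain e where e: "e \<in> E" "v \<in> ends e" and u: "\<forall>e'\<in>E. v \<in> ends e' \<longrightarrow> e' = e"
    unfolding is_leaf_def by blast
  obtain C where C: "C \<in> circ" "e \<in> C" using D[OF e(1)] dom_iff by blast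
  have CE: "C \<subseteq> E" by (rule circ_sub[OF C(1)])
  have "C - {e} \<noteq> C" using C by blast
  hence le: "ff (C - {e}) \<le> 0" using proper[OF C(1)] by blast
  have sub: "verts ends (C - {e}) \<subseteq> verts ends C - {v}"
    using u CE unfolding verts_def by blast
  have vC: "v \<in> verts ends C" using C e unfolding verts_def by blast
  have fv: "finite (verts ends C)" by (rule verts_fin[OF CE])
  have "card (verts ends (C - {e})) \<le> card (verts ends C - {v})"
    by (rule card_mono) (use fv sub in auto)
  moreover have "card (verts ends C - {v}) = card (verts ends C) - 1"
    by (rule card_Diff_singleton[OF vC])
  moreover have "card (verts ends C) \<ge> 1"
  proof -
    have "0 < card (verts ends C)" using card_gt_0_iff fv vC by blast
    thus ?thesis by linarith
  qed
  moreover have "card (C - {e}) = card C - 1" by (rule card_Diff_singleton[OF C(2)])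
  moreover have "card C \<ge> 1"
  proof -
    have "0 < card C" using card_gt_0_iff fin_sub[OF CE] C(2) by blast
    thus ?thesis by linarith
  qed
  ultimately have "1 \<le> ff (C - {e})"
    using circ_fx[OF C(1)] unfolding fx_def by linarith
  thus False using le by linarith
qed

lemma cycle_count:
  assumes K: "K \<in> comp_verts E ends" and cyc: "\<forall>v\<in>K. degree E ends v = 2"
    and X: "X \<subseteq> Aof E ends K"
  shows "card X \<le> card (verts ends X)"
proof -
  have XE: "X \<subseteq> E" using X A_sub by blast
  have vK: "verts ends X \<subseteq> K" using verts_mono[where ends=ends, OF X] verts_A[of K] by blast
  have fV: "finite (verts ends X)" by (rule verts_fin[OF XE])
  have "(\<Sum>s\<in>verts ends X. degree E ends s) = (\<Sum>s\<in>verts ends X. 2)"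
    by (rule sum.cong) (use vK cyc in auto)
  hence s1: "(\<Sum>s\<in>verts ends X. degree E ends s) = 2 * card (verts ends X)" by simp
  have "(\<Sum>e\<in>X. mu e * card (ends e \<inter> verts ends X)) \<le> (\<Sum>e\<in>E. mu e * card (ends e \<inter> verts ends X))"
    by (rule sum_mono2[OF finE XE]) simp
  moreover have "(\<Sum>e\<in>X. mu e * card (ends e \<inter> verts ends X)) = (\<Sum>e\<in>X. 2)"
  proof (rule sum.cong)
    fix e assume e: "e \<in> X"
    have "ends e \<subseteq> verts ends X" using e unfolding verts_def by blast
    thus "mu e * card (ends e \<inter> verts ends X) = 2" using contrib_full e XE by blast
  qed simp
  ultimately have "2 * card X \<le> (\<Sum>s\<in>verts ends X. degree E ends s)"
    using sum_deg[OF fV] by simp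
  thus ?thesis using s1 by linarith
qed

lemma back_nocycle:
  assumes D: "\<And>e. e \<in> E \<Longrightarrow> e \<in> Dom" and K: "K \<in> comp_verts E ends"
  shows "\<not> comp_is_cycle E ends K"
proof
  assume "comp_is_cycle E ends K"
  hence cyc: "\<forall>v\<in>K. degree E ends v = 2" unfolding comp_is_cycle_def .
  obtain x where x: "x \<in> K" by (rule comp_ne[OF K])
  have "x \<in> verts ends (Aof E ends K)" using x verts_A_eq[OF K] by simp
  then obtain g where g: "g \<in> Aof E ends K" unfolding verts_def by blast
  have gE: "g \<in> E" using g A_sub by blast
  obtain C where C: "C \<in> circ" "g \<in> C" using D[OF gE] dom_iff by blast
  have CE: "C \<subseteq> E" by (rule circ_sub[OF C(1)])
  have "ff (C - Aof E ends K) \<le> 0"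
    apply (rule proper[OF C(1)]) using C g by auto
  moreover have "card (C \<inter> Aof E ends K) \<le> card (verts ends (C \<inter> Aof E ends K))"
    by (rule cycle_count[OF K cyc]) blast
  ultimately have "ff C \<le> 0" using split_circ[OF K CE] unfolding fx_def by linarith
  thus False using circ_fx[OF C(1)] by linarith
qed

lemma basis_ne:
  assumes E: "E \<noteq> {}" and B: "m_basis E circ B"
  shows "B \<noteq> {}"
proof
  assume B0: "B = {}"
  obtain e where e: "e \<in> E" using E by blast
  have "m_indep circ {e}"
    unfolding m_indep_def
  proof
    assume "\<exists>C\<in>circ. C \<subseteq> {e}"
    then obtain C where C: "C \<in> circ" "C \<subseteq> {e}" by blast
    hence "C = {e}" using circ_ne[OF C(1)] by blast
    thus False using sing_not_circ[OF e] C by blast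
  qed
  moreover have "B \<subseteq> {e}" "{e} \<subseteq> E" using B0 e by auto
  ultimately have "{e} = B" using B unfolding m_basis_def by blast
  thus False using B0 by blast
qed

lemma cocircuit_ex:
  assumes E: "E \<noteq> {}"
  shows "\<exists>D. m_cocircuit E circ D"
proof -
  have PE: "m_meets_all_bases E circ E"
    unfolding m_meets_all_bases_def
  proof (intro conjI allI impI)
    show "E \<subseteq> E" "E \<noteq> {}" using E by auto
    fix B assume B: "m_basis E circ B"
    have "B \<subseteq> E" using B unfolding m_basis_def by blast
    moreover have "B \<noteq> {}" by (rule basis_ne[OF E B])
    ultimately show "E \<inter> B \<noteq> {}" by blast
  qed
  have ex: "\<exists>D. m_meets_all_bases E circ D \<and> (\<forall>D'. m_meets_all_bases E circ D' \<longrightarrow> card D \<le> card D')"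
    by (rule ex_has_least_nat[where P="m_meets_all_bases E circ" and k=E and m=card]) (rule PE)
  then obtain D where D: "m_meets_all_bases E circ D"
    and m: "\<forall>D'. m_meets_all_bases E circ D' \<longrightarrow> card D \<le> card D'" by blast
  have DE: "D \<subseteq> E" using D unfolding m_meets_all_bases_def by blast
  have "m_cocircuit E circ D"
    unfolding m_cocircuit_def
  proof (intro conjI allI impI)
    show "m_meets_all_bases E circ D" by (rule D)
    fix D' assume H: "D' \<subseteq> D \<and> m_meets_all_bases E circ D'"
    hence "card D \<le> card D'" using m by blast
    moreover have "card D' \<le> card D" using card_mono[OF fin_sub[OF DE]] H by blast
    ultimately have "card D' = card D" by linarith
    thus "D' = D" using card_subset_eq[OF fin_sub[OF DE]] H by blast
  qed
  thus ?thesis by blast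
qed

end

theorem mainTheorem14:
  fixes E :: "'e set" and ends :: "'e \<Rightarrow> 'v set"
  assumes "graph E ends" and "E \<noteq> {}"
  shows "(m_nontrivial E (bic_circuits E ends) \<and> cacti_graph E ends) \<longleftrightarrow>
         (\<forall>A\<in>comp_edge_sets E ends.
            A \<in> m_sim_dom E (bic_circuits E ends) // m_sim E (bic_circuits E ends))"
proof -
  interpret bgraph E ends by unfold_locales (rule assms(1))
  show ?thesis
  proof
    assume "m_nontrivial E circ \<and> cacti_graph E ends"
    hence cac: "cacti_graph E ends" by blast
    show "\<forall>A\<in>comp_edge_sets E ends. A \<in> Dom // sim"
    proof
      fix A assume "A \<in> comp_edge_sets E ends"
      then obtain K where K: "K \<in> comp_verts E ends" "A = Aof E ends K" unfolding ces_eq by blast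
      show "A \<in> Dom // sim" unfolding K(2) by (rule forward[OF cac K(1)])
    qed
  next
    assume H: "\<forall>A\<in>comp_edge_sets E ends. A \<in> Dom // sim"
    have D: "\<And>e. e \<in> E \<Longrightarrow> e \<in> Dom" by (rule all_dom[OF H])
    obtain e where e: "e \<in> E" using assms(2) by blast
    have "\<exists>C. C \<in> circ" using D[OF e] dom_iff by blast
    moreover have "\<exists>D. m_cocircuit E circ D" by (rule cocircuit_ex[OF assms(2)])
    ultimately have nt: "m_nontrivial E circ" unfolding m_nontrivial_def by blast
    have "cacti_graph E ends"
      unfolding cacti_graph_def using back_noleaf[OF D] back_nocycle[OF D] by blast
    thus "m_nontrivial E circ \<and> cacti_graph E ends" using nt by blast
  qed
qed


end
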